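(* If degree sequences $e$ and $d$ satisfy $e\preccurlyeq d$ in the Rao order, then $\Delta_{m(e)}(e)\le \Delta_{m(d)}(d)$.
   Context: Degree sequences (of finite simple graphs with at least one vertex) are listed in nonincreasing order. For such $d$, $m(d)=\max\{i : d_i\ge i-1\}$ and, for integers $k\ge 0$, $\Delta_k(d)=k(k-1)+\sum_{i>k}\min\{k,d_i\}-\sum_{i\le k}d_i$. Rao order: $e\preccurlyeq d$ if there exist a realization $H$ of $e$ and a realization $G$ of $d$ such that $H$ is an induced subgraph of $G$. *)

theory Defs
  imports Main
begin

definition simple_graph :: "nat \<Rightarrow> (nat \<Rightarrow> nat \<Rightarrow> bool) \<Rightarrow> bool" where
  "simple_graph n E \<longleftrightarrow> (\<forall>i<n. \<forall>j<n. E i j = E j i) \<and> (\<forall>i<n. \<not> E i i)"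

definition vdeg :: "nat \<Rightarrow> (nat \<Rightarrow> nat \<Rightarrow> bool) \<Rightarrow> nat \<Rightarrow> nat" where
  "vdeg n E i = card {j. j < n \<and> E i j}"

definition realizes :: "(nat \<Rightarrow> nat \<Rightarrow> bool) \<Rightarrow> nat list \<Rightarrow> bool" where
  "realizes E d \<longleftrightarrow> simple_graph (length d) E \<and> (\<forall>i<length d. vdeg (length d) E i = d ! i)"

definition degree_sequence :: "nat list \<Rightarrow> bool" where
  "degree_sequence d \<longleftrightarrow> d \<noteq> [] \<and> sorted_wrt (\<ge>) d \<and> (\<exists>E. realizes E d)"

definition rao_le :: "nat list \<Rightarrow> nat list \<Rightarrow> bool" where
  "rao_le e d \<longleftrightarrow> (\<exists>H G f. realizes H e \<and> realizes G d \<and>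
      inj_on f {0..<length e} \<and> f ` {0..<length e} \<subseteq> {0..<length d} \<and>
      (\<forall>i<length e. \<forall>j<length e. H i j = G (f i) (f j)))"

text \<open>1-based indexing: d_i = d ! (i - 1).\<close>
definition mval :: "nat list \<Rightarrow> nat" where
  "mval d = Max {i \<in> {1..length d}. d ! (i - 1) \<ge> i - 1}"

definition Delta :: "nat \<Rightarrow> nat list \<Rightarrow> int" where
  "Delta k d = int (k * (k - 1)) + (\<Sum>i\<in>{k<..length d}. int (min k (d ! (i - 1))))
              - (\<Sum>i\<in>{1..k}. int (d ! (i - 1)))"

end

theory Submission imports Defs begin

definition nonadj :: "(nat \<Rightarrow> nat \<Rightarrow> bool) \<Rightarrow> nat set \<Rightarrow> nat \<Rightarrow> nat" where
  "nonadj G A v = card {j\<in>A. j \<noteq> v \<and> \<not> G v j}"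
definition adjin :: "(nat \<Rightarrow> nat \<Rightarrow> bool) \<Rightarrow> nat set \<Rightarrow> nat \<Rightarrow> nat" where
  "adjin G S v = card {j\<in>S. G v j}"
definition rho :: "(nat \<Rightarrow> nat \<Rightarrow> bool) \<Rightarrow> nat \<Rightarrow> nat set \<Rightarrow> nat" where
  "rho G n A = (\<Sum>v\<in>A. nonadj G A v) + (\<Sum>v\<in>{0..<n}-A. adjin G ({0..<n}-A) v)"

lemma double_count:
  assumes "finite A" "finite B" "\<And>x y. x \<in> A \<Longrightarrow> y \<in> B \<Longrightarrow> G x y = G y x"
  shows "(\<Sum>v\<in>A. adjin G B v) = (\<Sum>v\<in>B. adjin G A v)"
proof -
  have "(\<Sum>v\<in>A. adjin G B v) = card (SIGMA v:A. {j\<in>B. G v j})"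
    using assms by (simp add: adjin_def)
  also have "\<dots> = card ((\<lambda>(x,y). (y,x)) ` (SIGMA v:B. {j\<in>A. G v j}))"
    by (rule arg_cong[where f=card]) (auto simp: image_def; metis assms(3))
  also have "\<dots> = card (SIGMA v:B. {j\<in>A. G v j})"
    by (rule card_image) (auto simp: inj_on_def)
  also have "\<dots> = (\<Sum>v\<in>B. adjin G A v)"
    using assms by (simp add: adjin_def)
  finally show ?thesis .
qed

lemma deg_split:
  assumes "realizes G d" "A \<subseteq> {0..<length d}" "v < length d"
  shows "d ! v = adjin G A v + adjin G ({0..<length d} - A) v"
proof -
  have "d ! v = card {j. j < length d \<and> G v j}" using assms by (simp add: realizes_def vdeg_def)
  also have "{j. j < length d \<and> G v j} = {j\<in>A. G v j} \<union> {j\<in>{0..<length d} - A. G v j}"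
    using assms by auto
  also have "card \<dots> = adjin G A v + adjin G ({0..<length d} - A) v"
    unfolding adjin_def using assms(2) by (subst card_Un_disjoint) (auto intro: finite_subset)
  finally show ?thesis .
qed

lemma nonadj_adj:
  assumes "realizes G d" "A \<subseteq> {0..<length d}" "v \<in> A"
  shows "adjin G A v + nonadj G A v = card A - 1"
proof -
  have irr: "\<not> G v v" using assms by (auto simp: realizes_def simple_graph_def)
  have fA: "finite A" using assms(2) by (rule finite_subset) simp
  have "A - {v} = {j\<in>A. G v j} \<union> {j\<in>A. j \<noteq> v \<and> \<not> G v j}" using irr assms by auto
  hence "card (A - {v}) = card ({j\<in>A. G v j} \<union> {j\<in>A. j \<noteq> v \<and> \<not> G v j})" by simp
  also have "\<dots> = adjin G A v + nonadj G A v"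
    unfolding adjin_def nonadj_def using fA by (subst card_Un_disjoint) auto
  finally have "card (A - {v}) = adjin G A v + nonadj G A v" .
  thus ?thesis using assms(3) fA by simp
qed

lemma psiG:
  assumes "realizes G d" "A \<subseteq> {0..<length d}"
  shows "int (card A * (card A - 1)) - (\<Sum>v\<in>A. int (d!v)) + (\<Sum>v\<in>{0..<length d}-A. int (d!v))
         = int (rho G (length d) A)"
proof -
  let ?B = "{0..<length d} - A"
  have fA: "finite A" using assms(2) by (rule finite_subset) simp
  have sym: "\<And>x y. x \<in> A \<Longrightarrow> y \<in> ?B \<Longrightarrow> G x y = G y x"
    using assms by (auto simp: realizes_def simple_graph_def)
  have dc: "(\<Sum>v\<in>A. adjin G ?B v) = (\<Sum>v\<in>?B. adjin G A v)"
    by (rule double_count) (use fA sym in auto)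
  have sA: "(\<Sum>v\<in>A. int (d!v)) = (\<Sum>v\<in>A. int (card A - 1) - int (nonadj G A v) + int (adjin G ?B v))"
  proof (rule sum.cong)
    fix v assume v: "v \<in> A"
    have "v < length d" using v assms by auto
    thus "int (d!v) = int (card A - 1) - int (nonadj G A v) + int (adjin G ?B v)"
      using deg_split[OF assms(1,2)] nonadj_adj[OF assms(1,2) v] by force
  qed simp
  have sB: "(\<Sum>v\<in>?B. int (d!v)) = (\<Sum>v\<in>?B. int (adjin G A v) + int (adjin G ?B v))"
    by (rule sum.cong) (use deg_split[OF assms(1,2)] in auto)
  have ck: "int (card A * (card A - 1)) = (\<Sum>v\<in>A. int (card A - 1))" by simp
  show ?thesis
    unfolding sA sB rho_def ck sum.distrib sum_subtractf of_nat_add of_nat_sum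
    using arg_cong[OF dc, of int] by (simp add: of_nat_sum)
qed

lemma rho_mono:
  assumes H: "realizes H e" and G: "realizes G d" and inj: "inj_on f {0..<length e}"
    and sub: "f ` {0..<length e} \<subseteq> {0..<length d}"
    and ind: "\<forall>i<length e. \<forall>j<length e. H i j = G (f i) (f j)"
    and A: "A \<subseteq> {0..<length d}"
  shows "rho H (length e) {i. i < length e \<and> f i \<in> A} \<le> rho G (length d) A"
proof -
  let ?A' = "{i. i < length e \<and> f i \<in> A}"
  let ?B' = "{0..<length e} - ?A'"
  let ?B = "{0..<length d} - A"
  have fA: "finite A" using A by (rule finite_subset) simp
  have injA: "inj_on f ?A'" using inj by (rule inj_on_subset) auto
  have injB: "inj_on f ?B'" using inj by (rule inj_on_subset) auto
  have 1: "(\<Sum>i\<in>?A'. nonadj H ?A' i) \<le> (\<Sum>i\<in>?A'. nonadj G A (f i))"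
  proof (rule sum_mono)
    fix i assume i: "i \<in> ?A'"
    show "nonadj H ?A' i \<le> nonadj G A (f i)"
      unfolding nonadj_def
    proof (rule card_inj_on_le)
      show "inj_on f {j \<in> ?A'. j \<noteq> i \<and> \<not> H i j}" using injA by (rule inj_on_subset) auto
      show "f ` {j \<in> ?A'. j \<noteq> i \<and> \<not> H i j} \<subseteq> {j \<in> A. j \<noteq> f i \<and> \<not> G (f i) j}"
        using i ind inj by (auto simp: inj_on_def)
      show "finite {j \<in> A. j \<noteq> f i \<and> \<not> G (f i) j}" using fA by simp
    qed
  qed
  also have "\<dots> = (\<Sum>v\<in>f ` ?A'. nonadj G A v)" by (simp add: sum.reindex[OF injA])
  also have "\<dots> \<le> (\<Sum>v\<in>A. nonadj G A v)" by (rule sum_mono2) (use fA in auto)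
  finally have X: "(\<Sum>i\<in>?A'. nonadj H ?A' i) \<le> (\<Sum>v\<in>A. nonadj G A v)" .
  have 2: "(\<Sum>i\<in>?B'. adjin H ?B' i) \<le> (\<Sum>i\<in>?B'. adjin G ?B (f i))"
  proof (rule sum_mono)
    fix i assume i: "i \<in> ?B'"
    show "adjin H ?B' i \<le> adjin G ?B (f i)"
      unfolding adjin_def
    proof (rule card_inj_on_le)
      show "inj_on f {j \<in> ?B'. H i j}" using injB by (rule inj_on_subset) auto
      show "f ` {j \<in> ?B'. H i j} \<subseteq> {j \<in> ?B. G (f i) j}"
        using i ind sub by (auto simp: image_subset_iff)
      show "finite {j \<in> ?B. G (f i) j}" by simp
    qed
  qed
  also have "\<dots> = (\<Sum>v\<in>f ` ?B'. adjin G ?B v)" by (simp add: sum.reindex[OF injB])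
  also have "\<dots> \<le> (\<Sum>v\<in>?B. adjin G ?B v)" by (rule sum_mono2) (use sub in auto)
  finally have Y: "(\<Sum>i\<in>?B'. adjin H ?B' i) \<le> (\<Sum>v\<in>?B. adjin G ?B v)" .
  show ?thesis unfolding rho_def using X Y by simp
qed

lemma topk:
  fixes e :: "nat list"
  assumes sorted: "sorted_wrt (\<ge>) e" and A: "A \<subseteq> {0..<length e}"
  shows "(\<Sum>i\<in>A. e!i) \<le> (\<Sum>i<card A. e!i)"
proof -
  let ?k = "card A"
  let ?K = "{..<?k}"
  have fA: "finite A" using A by (rule finite_subset) simp
  have kn: "?k \<le> length e" using card_mono[OF _ A] by simp
  define c :: nat where "c = (if ?k < length e then e!?k else 0)"
  have cardeq: "card (A - ?K) = card (?K - A)"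
  proof -
    have "?k = card (A \<inter> ?K) + card (A - ?K)" using card_Int_Diff[OF fA] .
    moreover have "card ?K = card (?K \<inter> A) + card (?K - A)" using card_Int_Diff[of ?K A] by simp
    moreover have "?K \<inter> A = A \<inter> ?K" by blast
    ultimately show ?thesis by simp
  qed
  have up: "(\<Sum>i\<in>A - ?K. e!i) \<le> card (A - ?K) * c"
  proof -
    have "(\<Sum>i\<in>A - ?K. e!i) \<le> (\<Sum>i\<in>A - ?K. c)"
    proof (rule sum_mono)
      fix i assume i: "i \<in> A - ?K"
      hence "?k \<le> i" "i < length e" using A by auto
      thus "e!i \<le> c" unfolding c_def
        using sorted_wrt_nth_less[OF sorted, of ?k i] by (cases "?k = i") auto
    qed
    thus ?thesis by simp
  qed
  have low: "card (?K - A) * c \<le> (\<Sum>i\<in>?K - A. e!i)"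
  proof -
    have "(\<Sum>i\<in>?K - A. c) \<le> (\<Sum>i\<in>?K - A. e!i)"
    proof (rule sum_mono)
      fix i assume i: "i \<in> ?K - A"
      hence "i < ?k" by auto
      thus "c \<le> e!i" unfolding c_def
        using sorted_wrt_nth_less[OF sorted, of i ?k] by auto
    qed
    thus ?thesis by simp
  qed
  have s1: "(\<Sum>i\<in>A. e!i) = (\<Sum>i\<in>A \<inter> ?K. e!i) + (\<Sum>i\<in>A - ?K. e!i)"
    using sum.Int_Diff[OF fA] .
  have s2: "(\<Sum>i\<in>?K. e!i) = (\<Sum>i\<in>?K \<inter> A. e!i) + (\<Sum>i\<in>?K - A. e!i)"
    using sum.Int_Diff[of ?K] by simp
  have s3: "?K \<inter> A = A \<inter> ?K" by blast
  show ?thesis using s1 s2 s3 up low cardeq by simp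
qed

definition Psi :: "nat \<Rightarrow> nat list \<Rightarrow> int" where
  "Psi k d = int (k * (k - 1)) + (\<Sum>i\<in>{k..<length d}. int (d!i)) - (\<Sum>i<k. int (d!i))"

lemma mval_props:
  assumes "d \<noteq> []"
  shows "1 \<le> mval d" "mval d \<le> length d" "mval d - 1 \<le> d ! (mval d - 1)"
    "mval d < length d \<Longrightarrow> d ! mval d < mval d"
proof -
  let ?S = "{i \<in> {1..length d}. d ! (i - 1) \<ge> i - 1}"
  have fin: "finite ?S" by simp
  have one: "1 \<in> ?S" using assms by (cases d) auto
  hence ne: "?S \<noteq> {}" by blast
  have mem: "mval d \<in> ?S" unfolding mval_def using Max_in[OF fin ne] .
  thus "1 \<le> mval d" "mval d \<le> length d" "mval d - 1 \<le> d ! (mval d - 1)" by auto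
  assume l: "mval d < length d"
  show "d ! mval d < mval d"
  proof (rule ccontr)
    assume "\<not> d ! mval d < mval d"
    hence "Suc (mval d) \<in> ?S" using l by auto
    hence "Suc (mval d) \<le> mval d" unfolding mval_def using Max_ge[OF fin] by blast
    thus False by simp
  qed
qed

lemma shift_sum: fixes k n :: nat shows "(\<Sum>i\<in>{k<..n}. g (i - 1)) = (\<Sum>i\<in>{k..<n}. (g i :: int))"
proof -
  have "{k<..n} = {Suc k..<Suc n}" by auto
  also have "\<dots> = Suc ` {k..<n}" by (simp add: image_Suc_atLeastLessThan)
  finally have eq: "{k<..n} = Suc ` {k..<n}" .
  show ?thesis unfolding eq by (subst sum.reindex) auto
qed

lemma shift_sum2: fixes k :: nat shows "(\<Sum>i\<in>{1..k}. g (i - 1)) = (\<Sum>i<k. (g i :: int))"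
proof -
  have "{1..k} = {Suc 0..<Suc k}" by auto
  also have "\<dots> = Suc ` {..<k}" by (simp add: image_Suc_atLeastLessThan atLeast0LessThan[symmetric])
  finally have eq: "{1..k} = Suc ` {..<k}" .
  show ?thesis unfolding eq by (subst sum.reindex) auto
qed

lemma Delta_Psi:
  assumes "d \<noteq> []" "sorted_wrt (\<ge>) d"
  shows "Delta (mval d) d = Psi (mval d) d"
proof -
  let ?m = "mval d"
  have "(\<Sum>i\<in>{?m<..length d}. int (min ?m (d ! (i - 1)))) = (\<Sum>i\<in>{?m..<length d}. int (min ?m (d ! i)))"
    by (rule shift_sum)
  also have "\<dots> = (\<Sum>i\<in>{?m..<length d}. int (d ! i))"
  proof (rule sum.cong)
    fix i assume i: "i \<in> {?m..<length d}"
    have lt: "d ! ?m < ?m" using mval_props(4)[OF assms(1)] i by auto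
    have "d ! i \<le> d ! ?m" using i sorted_wrt_nth_less[OF assms(2), of ?m i] by (cases "i = ?m") auto
    thus "int (min ?m (d ! i)) = int (d ! i)" using lt by simp
  qed simp
  finally show ?thesis unfolding Delta_def Psi_def using shift_sum2[of "\<lambda>i. int (d!i)"] by simp
qed

lemma Psi_step:
  assumes "k < length d"
  shows "Psi (Suc k) d = Psi k d + 2 * int k - 2 * int (d ! k)"
proof -
  have "{k..<length d} = insert k {Suc k..<length d}" using assms by auto
  hence "(\<Sum>i\<in>{k..<length d}. int (d!i)) = int (d!k) + (\<Sum>i\<in>{Suc k..<length d}. int (d!i))" by simp
  moreover have "int (Suc k * (Suc k - 1)) = int (k * (k - 1)) + 2 * int k" by (cases k) (auto simp: algebra_simps)
  ultimately show ?thesis unfolding Psi_def by simp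
qed

lemma Psi_min:
  assumes ne: "d \<noteq> []" and so: "sorted_wrt (\<ge>) d" and k: "k \<le> length d"
  shows "Psi (mval d) d \<le> Psi k d"
proof (cases "mval d \<le> k")
  case True
  show ?thesis using True
  proof (induct k rule: dec_induct)
    case (step x)
    have xl: "x < length d" using step k by simp
    have "d ! x \<le> d ! mval d" using step xl sorted_wrt_nth_less[OF so, of "mval d" x] by (cases "x = mval d") auto
    moreover have "d ! mval d < mval d" using mval_props(4)[OF ne] step xl by simp
    ultimately show ?case using Psi_step[OF xl] step by simp
  qed simp
next
  case False
  hence "k \<le> mval d" by simp
  thus ?thesis
  proof (induct k rule: inc_induct)
    case (step x)
    have ml: "mval d \<le> length d" "1 \<le> mval d" "mval d - 1 \<le> d ! (mval d - 1)" using mval_props[OF ne] by auto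
    have xl: "x < length d" using step ml by simp
    have "d ! (mval d - 1) \<le> d ! x" using step ml sorted_wrt_nth_less[OF so, of x "mval d - 1"] by (cases "x = mval d - 1") auto
    hence "x \<le> d ! x" using ml step by linarith
    thus ?case using Psi_step[OF xl] step by simp
  qed simp
qed

lemma sum_total:
  fixes n :: nat
  assumes "A \<subseteq> {0..<n}"
  shows "(\<Sum>i\<in>{0..<n} - A. g i) = (\<Sum>i\<in>{0..<n}. g i) - (\<Sum>i\<in>A. (g i :: int))"
  using assms by (intro sum_diff) auto

lemma sum_tail:
  fixes k n :: nat assumes "k \<le> n"
  shows "(\<Sum>i\<in>{k..<n}. g i) = (\<Sum>i\<in>{0..<n}. g i) - (\<Sum>i<k. (g i::int))"
proof -
  have e: "{k..<n} = {0..<n} - {..<k}" by (rule set_eqI) (simp add: not_less conj_commute)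
  show ?thesis unfolding e by (rule sum_total) (use assms in auto)
qed

theorem theorem12:
  assumes "degree_sequence e" and "degree_sequence d" and "rao_le e d"
  shows "Delta (mval e) e \<le> Delta (mval d) d"
proof -
  obtain H G f where H: "realizes H e" and G: "realizes G d" and inj: "inj_on f {0..<length e}"
    and sub: "f ` {0..<length e} \<subseteq> {0..<length d}"
    and ind: "\<forall>i<length e. \<forall>j<length e. H i j = G (f i) (f j)"
    using assms(3) unfolding rao_le_def by blast
  have ne: "e \<noteq> []" and se: "sorted_wrt (\<ge>) e" using assms(1) by (auto simp: degree_sequence_def)
  have nd: "d \<noteq> []" and sd: "sorted_wrt (\<ge>) d" using assms(2) by (auto simp: degree_sequence_def)
  let ?A = "{0..<mval d}"
  let ?A' = "{i. i < length e \<and> f i \<in> ?A}"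
  let ?k = "card ?A'"
  have A: "?A \<subseteq> {0..<length d}" using mval_props(2)[OF nd] by auto
  have A': "?A' \<subseteq> {0..<length e}" by auto
  have kl: "?k \<le> length e" using card_mono[OF _ A'] by simp
  have "Delta (mval e) e = Psi (mval e) e" by (rule Delta_Psi[OF ne se])
  also have "\<dots> \<le> Psi ?k e" by (rule Psi_min[OF ne se kl])
  also have "\<dots> \<le> int (?k * (?k - 1)) - (\<Sum>v\<in>?A'. int (e!v)) + (\<Sum>v\<in>{0..<length e}-?A'. int (e!v))"
  proof -
    have t: "(\<Sum>i\<in>?A'. e!i) \<le> (\<Sum>i<?k. e!i)" by (rule topk[OF se A'])
    have t0: "int (\<Sum>i\<in>?A'. e!i) \<le> int (\<Sum>i<?k. e!i)" using t by (simp only: of_nat_le_iff)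
    have t': "(\<Sum>i\<in>?A'. int (e!i)) \<le> (\<Sum>i<?k. int (e!i))" using t0 by (simp only: of_nat_sum)
    have s1: "(\<Sum>i\<in>{?k..<length e}. int (e!i)) = (\<Sum>i\<in>{0..<length e}. int (e!i)) - (\<Sum>i<?k. int (e!i))"
      by (rule sum_tail[OF kl])
    show ?thesis unfolding Psi_def s1 sum_total[OF A'] using t' by simp
  qed
  also have "\<dots> = int (rho H (length e) ?A')" by (rule psiG[OF H A'])
  also have "\<dots> \<le> int (rho G (length d) ?A)" using rho_mono[OF H G inj sub ind A] by simp
  also have "\<dots> = int (mval d * (mval d - 1)) - (\<Sum>v\<in>?A. int (d!v)) + (\<Sum>v\<in>{0..<length d}-?A. int (d!v))"
    using psiG[OF G A] by simp
  also have "\<dots> = Psi (mval d) d"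
  proof -
    have "{0..<length d} - ?A = {mval d..<length d}" by auto
    thus ?thesis unfolding Psi_def by (simp add: atLeast0LessThan)
  qed
  also have "\<dots> = Delta (mval d) d" by (rule Delta_Psi[OF nd sd, symmetric])
  finally show ?thesis .
qed
end
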